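(* Consider RejectionSampling run on $P$ and $k$ with parameter $c>1$, and assume the LSH data structure is successful. In the first iteration in which a point is added to $S$ (i.e. when $S=\emptyset$), each point $x\in P$ is the point added with probability $1/n$. In every later step, given the current set $S\neq\emptyset$, the probability that the next point added to $S$ is $x\in P$ equals $\dfrac{\mathrm{Dist}(x,\mathrm{Query}(x))^2}{\sum_{y\in P}\mathrm{Dist}(y,\mathrm{Query}(y))^2}$, where Query is answered by the LSH data structure containing the points of $S$; in particular this probability does not depend on the random multi-tree embedding.
   Context: $P\subseteq\mathbb{R}^d$ has $n$ points; $\mathrm{Dist}(x,y)=\|x-y\|_2$, $\mathrm{Dist}(x,C)=\min_{y\in C}\mathrm{Dist}(x,y)$. Tree embedding: compute $\mathrm{MaxDist}$, an upper bound on the maximum pairwise distance within factor $2$ of it; add a uniformly random shift $s\in[0,\mathrm{MaxDist}]$ to each coordinate of all points; the root (height $0$) is the axis-aligned cube of side $2\,\mathrm{MaxDist}$ centered at an input point; recursively each node cube of side $L$ at height $i$ is split into $2^d$ subcubes of side $L/2$, nonempty ones becoming children connected by edges of weight $\sqrt d\,\mathrm{MaxDist}/2^i$, until each cube holds at most one point. $\mathrm{TreeDist}_T$ is the shortest-path distance in tree $T$; the multi-tree embedding has three such trees with independent shifts, $\mathrm{MultiTreeDist}$ is the minimum of the three tree distances, $\mathrm{MultiTreeDist}(p,S)=\min_{q\in S}\mathrm{MultiTreeDist}(p,q)$. MultiTreeSample() returns each $x\in P$ with probability $\mathrm{MultiTreeDist}(x,S)^2/\sum_{y\in P}\mathrm{MultiTreeDist}(y,S)^2$,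 where $S$ is the set of points opened so far by MultiTreeOpen (with $\mathrm{MultiTreeDist}(x,\emptyset)^2$ a constant $M$ independent of $x$). LSH data structure (parameter $c$): supports Insert$(p)$ and Query$(p)$; it is successful if Query$(p)$ always returns an inserted point at distance at most $c\cdot\delta$ from $p$, where $\delta$ is the minimum distance from $p$ to an inserted point. RejectionSampling$(P,k)$: $S\leftarrow\emptyset$; build the multi-tree embedding; while $|S|<k$: $x\leftarrow$ MultiTreeSample(); with probability $\min\{1,\mathrm{Dist}(x,\mathrm{Query}(x))^2/(c^2\,\mathrm{MultiTreeDist}(x,S)^2)\}$ (probability $1$ when $S=\emptyset$): $S\leftarrow S\cup\{x\}$, MultiTreeOpen$(x)$, Insert$(x)$. Output $S$. *)

theory Defs
  imports "HOL-Analysis.Analysis" "HOL-Probability.Probability"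
begin

text \<open>One tree is determined by MaxDist MD, the input point p0 (before shifting) at which the
root cube is centred, and the shift s added to every coordinate of all points.  After shifting,
the root cube (height 0) is centred at the shifted point p0 + s, has side 2 MD, so its lower
corner in coordinate b is p0.b + s - MD.  The cube at height i containing a (shifted) point has
side 2 MD / 2^i; its index in coordinate b is given below (the upper boundary face of the closed
root cube is attributed to the last sub-cube).\<close>

definition cell :: "real \<Rightarrow> 'a::euclidean_space \<Rightarrow> real \<Rightarrow> nat \<Rightarrow> 'a \<Rightarrow> 'a \<Rightarrow> int" where
  "cell MD p0 s i x b =
     min (\<lfloor>((x \<bullet> b + s) - (p0 \<bullet> b + s - MD)) / (2 * MD / 2 ^ i)\<rfloor>) (2 ^ i - 1)"

definition same_cell :: "real \<Rightarrow> 'a::euclidean_space \<Rightarrow> real \<Rightarrow> nat \<Rightarrow> 'a \<Rightarrow> 'a \<Rightarrow> bool" where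
  "same_cell MD p0 s i x y = (\<forall>b\<in>Basis. cell MD p0 s i x b = cell MD p0 s i y b)"

text \<open>Smallest height at which x and y lie in different cubes (their lowest common ancestor
is at height sep_height - 1).\<close>
definition sep_height :: "real \<Rightarrow> 'a::euclidean_space \<Rightarrow> real \<Rightarrow> 'a \<Rightarrow> 'a \<Rightarrow> nat" where
  "sep_height MD p0 s x y = (LEAST i. \<not> same_cell MD p0 s i x y)"

definition leaf_height :: "'a set \<Rightarrow> real \<Rightarrow> 'a::euclidean_space \<Rightarrow> real \<Rightarrow> 'a \<Rightarrow> nat" where
  "leaf_height P MD p0 s x = (LEAST i. \<forall>y\<in>P. y \<noteq> x \<longrightarrow> \<not> same_cell MD p0 s i x y)"

text \<open>Weight of an edge between a node at height i and its child.\<close>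
definition edge_weight :: "'a::euclidean_space itself \<Rightarrow> real \<Rightarrow> nat \<Rightarrow> real" where
  "edge_weight _ MD i = sqrt (real DIM('a)) * MD / 2 ^ i"

definition tree_dist :: "'a set \<Rightarrow> real \<Rightarrow> 'a::euclidean_space \<Rightarrow> real \<Rightarrow> 'a \<Rightarrow> 'a \<Rightarrow> real" where
  "tree_dist P MD p0 s x y =
     (if x = y then 0 else
        (\<Sum>j\<in>{sep_height MD p0 s x y - 1..<leaf_height P MD p0 s x}. edge_weight TYPE('a) MD j)
      + (\<Sum>j\<in>{sep_height MD p0 s x y - 1..<leaf_height P MD p0 s y}. edge_weight TYPE('a) MD j))"

text \<open>Multi-tree embedding: three trees, given by (root centre, shift) pairs.\<close>
type_synonym 'a trees3 = "('a \<times> real) \<times> ('a \<times> real) \<times> ('a \<times> real)"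

definition multi_tree_dist :: "'a set \<Rightarrow> real \<Rightarrow> 'a::euclidean_space trees3 \<Rightarrow> 'a \<Rightarrow> 'a \<Rightarrow> real" where
  "multi_tree_dist P MD T x y =
     (case T of ((p1, s1), (p2, s2), (p3, s3)) \<Rightarrow>
        min (tree_dist P MD p1 s1 x y) (min (tree_dist P MD p2 s2 x y) (tree_dist P MD p3 s3 x y)))"

definition multi_tree_dist_set :: "'a set \<Rightarrow> real \<Rightarrow> 'a::euclidean_space trees3 \<Rightarrow> 'a \<Rightarrow> 'a set \<Rightarrow> real" where
  "multi_tree_dist_set P MD T x S = Min ((\<lambda>q. multi_tree_dist P MD T x q) ` S)"

definition mt_weight :: "'a set \<Rightarrow> real \<Rightarrow> 'a::euclidean_space trees3 \<Rightarrow> real \<Rightarrow> 'a set \<Rightarrow> 'a \<Rightarrow> real" where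
  "mt_weight P MD T M S x = (if S = {} then M else (multi_tree_dist_set P MD T x S)\<^sup>2)"

definition multi_tree_sample :: "'a set \<Rightarrow> real \<Rightarrow> 'a::euclidean_space trees3 \<Rightarrow> real \<Rightarrow> 'a set \<Rightarrow> 'a pmf" where
  "multi_tree_sample P MD T M S =
     embed_pmf (\<lambda>x. if x \<in> P then mt_weight P MD T M S x / (\<Sum>y\<in>P. mt_weight P MD T M S y) else 0)"

definition accept_prob :: "'a set \<Rightarrow> real \<Rightarrow> 'a::euclidean_space trees3 \<Rightarrow> real \<Rightarrow> 'a set \<Rightarrow> ('a \<Rightarrow> 'a) \<Rightarrow> 'a \<Rightarrow> real" where
  "accept_prob P MD T c S Q x =
     (if S = {} then 1
      else min 1 ((dist x (Q x))\<^sup>2 / (c\<^sup>2 * (multi_tree_dist_set P MD T x S)\<^sup>2)))"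

text \<open>The inner loop of RejectionSampling for a fixed current set S (and LSH query answers Q for
the structure containing S): repeatedly sample and accept/reject until a point is accepted;
the result is the next point added to S.\<close>
partial_function (spmf) next_added ::
  "'a set \<Rightarrow> real \<Rightarrow> 'a::euclidean_space trees3 \<Rightarrow> real \<Rightarrow> real \<Rightarrow> 'a set \<Rightarrow> ('a \<Rightarrow> 'a) \<Rightarrow> 'a spmf"
where
  "next_added P MD T M c S Q =
     bind_spmf (spmf_of_pmf (multi_tree_sample P MD T M S)) (\<lambda>x.
       bind_spmf (spmf_of_pmf (bernoulli_pmf (accept_prob P MD T c S Q x))) (\<lambda>b.
         if b then return_spmf x else next_added P MD T M c S Q))"

text \<open>Query answers Q of an LSH structure containing exactly the points of S are successful:
every query returns an inserted point within c times the distance to the nearest inserted point.\<close>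
definition lsh_successful :: "'a set \<Rightarrow> 'a::metric_space set \<Rightarrow> real \<Rightarrow> ('a \<Rightarrow> 'a) \<Rightarrow> bool" where
  "lsh_successful P S c Q =
     (\<forall>p\<in>P. Q p \<in> S \<and> dist p (Q p) \<le> c * Min ((\<lambda>q. dist p q) ` S))"

end

theory Submission
  imports Defs
begin


lemma cell_bnd:
  fixes x p0 b :: "'a::euclidean_space" and i :: nat
  assumes md: "MD > 0" and le: "x \<bullet> b - p0 \<bullet> b \<le> MD"
  defines "v \<equiv> (x \<bullet> b - p0 \<bullet> b + MD) / (2 * MD / 2 ^ i)"
  shows "real_of_int (cell MD p0 s i x b) \<le> v \<and> v \<le> real_of_int (cell MD p0 s i x b) + 1"
proof -
  have c: "cell MD p0 s i x b = min \<lfloor>v\<rfloor> (2 ^ i - 1)"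
    unfolding cell_def v_def by (simp add: algebra_simps)
  have "v = (x \<bullet> b - p0 \<bullet> b + MD) * 2 ^ i / (2 * MD)" unfolding v_def by simp
  also have "\<dots> \<le> (2 * MD) * 2 ^ i / (2 * MD)"
    using le md by (intro divide_right_mono mult_right_mono) auto
  also have "\<dots> = 2 ^ i" using md by simp
  finally have v: "v \<le> 2 ^ i" .
  show ?thesis
  proof (cases "\<lfloor>v\<rfloor> \<le> 2 ^ i - 1")
    case True
    then show ?thesis unfolding c by (simp add: min_def)
  next
    case False
    then have "min \<lfloor>v\<rfloor> (2 ^ i - 1) = 2 ^ i - 1" by simp
    then have "(2::int) ^ i \<le> \<lfloor>v\<rfloor>" using False by simp
    then have "real_of_int ((2::int) ^ i) \<le> v" by (simp only: le_floor_iff)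
    then have "2 ^ i \<le> v" by simp
    with v show ?thesis unfolding c using False by simp
  qed
qed

lemma same_cell_coord:
  fixes x y p0 :: "'a::euclidean_space"
  assumes md: "MD > 0" and hx: "dist x p0 \<le> MD" and hy: "dist y p0 \<le> MD"
    and sc: "same_cell MD p0 s i x y" and b: "b \<in> Basis"
  shows "\<bar>x \<bullet> b - y \<bullet> b\<bar> \<le> 2 * MD / 2 ^ i"
proof -
  have "\<bar>(x - p0) \<bullet> b\<bar> \<le> norm (x - p0)" using b Basis_le_norm by blast
  then have lx: "x \<bullet> b - p0 \<bullet> b \<le> MD" using hx by (simp add: dist_norm inner_diff_left)
  have "\<bar>(y - p0) \<bullet> b\<bar> \<le> norm (y - p0)" using b Basis_le_norm by blast
  then have ly: "y \<bullet> b - p0 \<bullet> b \<le> MD" using hy by (simp add: dist_norm inner_diff_left)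
  define w where "w = 2 * MD / 2 ^ i"
  have w: "w > 0" using md by (simp add: w_def)
  have eq: "cell MD p0 s i x b = cell MD p0 s i y b" using sc b by (simp add: same_cell_def)
  have "\<bar>(x \<bullet> b - p0 \<bullet> b + MD) / w - (y \<bullet> b - p0 \<bullet> b + MD) / w\<bar> \<le> 1"
    using cell_bnd[OF md lx, of s i] cell_bnd[OF md ly, of s i] eq unfolding w_def by linarith
  then have "\<bar>(x \<bullet> b - y \<bullet> b) / w\<bar> \<le> 1" by (simp add: diff_divide_distrib[symmetric])
  then have "\<bar>x \<bullet> b - y \<bullet> b\<bar> / w \<le> 1" using w by simp
  then show ?thesis using w unfolding w_def[symmetric] by (simp add: divide_le_eq)
qed

lemma coord_dist:
  fixes x y :: "'a::euclidean_space"
  assumes "w \<ge> 0" and "\<And>b. b \<in> Basis \<Longrightarrow> \<bar>x \<bullet> b - y \<bullet> b\<bar> \<le> w"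
  shows "dist x y \<le> sqrt (real DIM('a)) * w"
proof -
  have "dist x y = sqrt (\<Sum>b\<in>Basis. ((x - y) \<bullet> b)^2)"
    by (simp add: dist_norm norm_eq_sqrt_inner euclidean_inner[of "x-y" "x-y"] power2_eq_square)
  also have "\<dots> \<le> sqrt (\<Sum>b\<in>(Basis::'a set). w^2)"
  proof (intro real_sqrt_le_mono sum_mono)
    fix b :: 'a assume "b \<in> Basis"
    then have "\<bar>(x - y) \<bullet> b\<bar> \<le> \<bar>w\<bar>" using assms by (simp add: inner_diff_left)
    then show "((x - y) \<bullet> b)^2 \<le> w^2" by (simp add: abs_le_square_iff)
  qed
  also have "\<dots> = sqrt (real DIM('a)) * w" using assms(1) by (simp add: real_sqrt_mult)
  finally show ?thesis .
qed

lemma same_cell_dist: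
  fixes x y p0 :: "'a::euclidean_space"
  assumes md: "MD > 0" and hx: "dist x p0 \<le> MD" and hy: "dist y p0 \<le> MD"
    and sc: "same_cell MD p0 s i x y"
  shows "dist x y \<le> sqrt (real DIM('a)) * (2 * MD / 2 ^ i)"
  by (rule coord_dist) (use same_cell_coord[OF assms] md in auto)

lemma same_cell_0:
  fixes x y p0 :: "'a::euclidean_space"
  assumes md: "MD > 0" and hx: "dist x p0 \<le> MD" and hy: "dist y p0 \<le> MD"
  shows "same_cell MD p0 s 0 x y"
proof -
  have "cell MD p0 s 0 z b = 0" if "dist z p0 \<le> MD" "b \<in> Basis" for z b
  proof -
    have "\<bar>(z - p0) \<bullet> b\<bar> \<le> norm (z - p0)" using that Basis_le_norm by blast
    then have "\<bar>z \<bullet> b - p0 \<bullet> b\<bar> \<le> MD" using that by (simp add: dist_norm inner_diff_left)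
    then have "0 \<le> (z \<bullet> b - p0 \<bullet> b + MD) / (2 * MD)" using md by simp
    then have "0 \<le> \<lfloor>(z \<bullet> b - p0 \<bullet> b + MD) / (2 * MD)\<rfloor>" by simp
    then show ?thesis unfolding cell_def by (simp add: algebra_simps)
  qed
  then show ?thesis using hx hy by (simp add: same_cell_def)
qed

lemma small_cell:
  assumes "\<delta> > 0" and "MD > 0"
  shows "\<exists>i::nat. sqrt (real DIM('a::euclidean_space)) * (2 * MD / 2 ^ i) < \<delta>"
proof -
  obtain n :: nat where n: "sqrt (real DIM('a)) * (2 * MD) / \<delta> < 2 ^ n"
    using real_arch_pow[of 2] by fastforce
  then have "sqrt (real DIM('a)) * (2 * MD) < \<delta> * 2 ^ n" using assms by (simp add: divide_less_eq mult.commute)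
  then have "sqrt (real DIM('a)) * (2 * MD) / 2 ^ n < \<delta>" by (simp add: divide_less_eq)
  then show ?thesis by (intro exI[of _ n]) simp
qed

lemma same_cell_sym: "same_cell MD p0 s i x y = same_cell MD p0 s i y x"
  unfolding same_cell_def by auto

lemma tree_dist_ge:
  fixes P :: "'a::euclidean_space set"
  assumes fin: "finite P" and md: "MD > 0" and hP: "\<And>z. z \<in> P \<Longrightarrow> dist z p0 \<le> MD"
    and x: "x \<in> P" and y: "y \<in> P"
  shows "dist x y \<le> tree_dist P MD p0 s x y"
proof (cases "x = y")
  case True then show ?thesis by (simp add: tree_dist_def)
next
  case False
  have leafex: "\<exists>i. \<forall>z\<in>P. z \<noteq> u \<longrightarrow> \<not> same_cell MD p0 s i u z" if u: "u \<in> P" and ne: "P - {u} \<noteq> {}" for u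
  proof -
    define \<delta> where "\<delta> = Min ((\<lambda>z. dist u z) ` (P - {u}))"
    have "\<delta> \<in> (\<lambda>z. dist u z) ` (P - {u})" unfolding \<delta>_def using fin ne by (intro Min_in) auto
    then have dpos: "\<delta> > 0" by auto
    obtain i :: nat where i: "sqrt (real DIM('a)) * (2 * MD / 2 ^ i) < \<delta>" using small_cell[OF dpos md] by blast
    show ?thesis
    proof (intro exI[of _ i] ballI impI notI)
      fix z assume z: "z \<in> P" "z \<noteq> u" and sc: "same_cell MD p0 s i u z"
      have "\<delta> \<le> dist u z" unfolding \<delta>_def using fin z by (intro Min_le) auto
      moreover have "dist u z \<le> sqrt (real DIM('a)) * (2 * MD / 2 ^ i)"
        using same_cell_dist[OF md hP[OF u] hP[OF z(1)] sc] .
      ultimately show False using i by linarith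
    qed
  qed
  define sep where "sep = sep_height MD p0 s x y"
  define lx where "lx = leaf_height P MD p0 s x"
  define ly where "ly = leaf_height P MD p0 s y"
  have lxP: "\<forall>z\<in>P. z \<noteq> x \<longrightarrow> \<not> same_cell MD p0 s lx x z"
    unfolding lx_def leaf_height_def by (rule LeastI_ex, rule leafex) (use x y False in auto)
  have lyP: "\<forall>z\<in>P. z \<noteq> y \<longrightarrow> \<not> same_cell MD p0 s ly y z"
    unfolding ly_def leaf_height_def by (rule LeastI_ex, rule leafex) (use x y False in auto)
  have nx: "\<not> same_cell MD p0 s lx x y" using lxP y False by auto
  have ny: "\<not> same_cell MD p0 s ly x y" using lyP x False same_cell_sym by metis
  have sepx: "sep \<le> lx" unfolding sep_def sep_height_def using nx by (rule Least_le)
  have sepy: "sep \<le> ly" unfolding sep_def sep_height_def using ny by (rule Least_le)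
  have nsep: "\<not> same_cell MD p0 s sep x y" unfolding sep_def sep_height_def using nx by (rule LeastI)
  have s0: "same_cell MD p0 s 0 x y" using same_cell_0[OF md hP[OF x] hP[OF y]] .
  then have sep1: "sep \<ge> 1" using nsep by (cases sep) auto
  define h where "h = sep - 1"
  have hlt: "h < sep" using sep1 h_def by simp
  have sch: "same_cell MD p0 s h x y"
    using not_less_Least[OF hlt[unfolded sep_def sep_height_def]] unfolding sep_def sep_height_def by blast
  have dle: "dist x y \<le> sqrt (real DIM('a)) * (2 * MD / 2 ^ h)"
    using same_cell_dist[OF md hP[OF x] hP[OF y] sch] .
  have ew: "edge_weight TYPE('a) MD h \<le> (\<Sum>j\<in>{h..<L}. edge_weight TYPE('a) MD j)" if "h < L" for L
    by (rule member_le_sum) (use that md in \<open>auto simp: edge_weight_def\<close>)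
  have "tree_dist P MD p0 s x y = (\<Sum>j\<in>{h..<lx}. edge_weight TYPE('a) MD j) + (\<Sum>j\<in>{h..<ly}. edge_weight TYPE('a) MD j)"
    unfolding tree_dist_def using False by (simp add: h_def sep_def lx_def ly_def)
  moreover have "2 * edge_weight TYPE('a) MD h \<le> \<dots>"
    using ew[of lx] ew[of ly] sepx sepy hlt by linarith
  moreover have "2 * edge_weight TYPE('a) MD h = sqrt (real DIM('a)) * (2 * MD / 2 ^ h)"
    by (simp add: edge_weight_def)
  ultimately show ?thesis using dle by linarith
qed

lemma mtd_ge:
  fixes P :: "'a::euclidean_space set"
  assumes fin: "finite P" and md: "MD > 0" and hP: "\<And>z p. z \<in> P \<Longrightarrow> p \<in> P \<Longrightarrow> dist z p \<le> MD"
    and p: "p1 \<in> P" "p2 \<in> P" "p3 \<in> P"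
    and x: "x \<in> P" and y: "y \<in> P"
  shows "dist x y \<le> multi_tree_dist P MD ((p1, s1), (p2, s2), (p3, s3)) x y"
  unfolding multi_tree_dist_def
  using tree_dist_ge[OF fin md hP x y, of p1 s1] tree_dist_ge[OF fin md hP x y, of p2 s2]
     tree_dist_ge[OF fin md hP x y, of p3 s3] p by simp

lemma pmf_embed_fin:
  assumes fin: "finite P" and nn: "\<And>x. 0 \<le> f x" and z: "\<And>x. x \<notin> P \<Longrightarrow> f x = 0"
    and s: "sum f P = 1"
  shows "pmf (embed_pmf f) x = f x"
proof (rule pmf_embed_pmf[OF nn])
  have "(\<integral>\<^sup>+x. ennreal (f x) \<partial>count_space UNIV) = (\<Sum>x\<in>P. ennreal (f x))"
    by (rule nn_integral_count_space') (use fin z in auto)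
  also have "\<dots> = 1" using nn s by simp
  finally show "(\<integral>\<^sup>+x. ennreal (f x) \<partial>count_space UNIV) = 1" .
qed

lemma set_pmf_embed_sub:
  assumes "\<And>x. pmf p x = (if x \<in> P then g x else 0)"
  shows "set_pmf p \<subseteq> P"
  using assms by (auto simp: set_pmf_iff split: if_splits)

lemma fix_val:
  fixes P :: "'a::euclidean_space set" and MD M c :: real and T S Q
  defines "N \<equiv> next_added P MD T M c S Q"
  defines "w \<equiv> \<lambda>z. pmf (multi_tree_sample P MD T M S) z"
  defines "a \<equiv> accept_prob P MD T c S Q"
  assumes fin: "finite P" and supp: "set_pmf (multi_tree_sample P MD T M S) \<subseteq> P"
    and a01: "\<And>z. 0 \<le> a z \<and> a z \<le> 1"
    and pos: "(\<Sum>z\<in>P. w z * a z) > 0"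
  shows "spmf N x = w x * a x / (\<Sum>z\<in>P. w z * a z)"
proof -
  let ?v = "spmf N x"
  have sw: "(\<Sum>z\<in>P. w z) = 1"
    using sum_pmf_eq_1[OF fin supp] unfolding w_def by simp
  have "?v = (\<integral>z. (a z * (if z = x then 1 else 0) + (1 - a z) * ?v) \<partial>measure_pmf (multi_tree_sample P MD T M S))"
    apply (subst N_def, subst next_added.simps)
    apply (simp add: pmf_bind flip: N_def a_def)
    apply (rule Bochner_Integration.integral_cong[OF refl])
    using a01 by (simp add: pmf_return algebra_simps N_def)
  also have "\<dots> = (\<Sum>z\<in>P. w z * (a z * (if z = x then 1 else 0) + (1 - a z) * ?v))"
    by (subst integral_measure_pmf[OF fin]) (use supp in \<open>auto simp: w_def\<close>)
  also have "\<dots> = (\<Sum>z\<in>P. w z * a z * (if z = x then 1 else 0)) + ?v * ((\<Sum>z\<in>P. w z) - (\<Sum>z\<in>P. w z * a z))"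
    by (simp add: algebra_simps sum.distrib sum_distrib_left sum_distrib_right sum_subtractf)
  also have "(\<Sum>z\<in>P. w z * a z * (if z = x then 1 else 0)) = w x * a x"
  proof (cases "x \<in> P")
    case True then show ?thesis by (simp add: sum.delta' fin if_distrib cong: if_cong)
  next
    case False
    then have "w x = 0" using supp unfolding w_def by (meson pmf_eq_0_set_pmf subsetD)
    with False show ?thesis by (simp, intro sum.neutral ballI) auto
  qed
  finally have "?v * (\<Sum>z\<in>P. w z * a z) = w x * a x" using sw by (simp add: algebra_simps)
  then show ?thesis using pos by (simp add: field_simps)
qed

theorem mainTheorem7:
  fixes P S :: "'a::euclidean_space set" and MD M c s1 s2 s3 :: real and p1 p2 p3 :: 'a
    and Q :: "'a \<Rightarrow> 'a"
  assumes "finite P" and "P \<noteq> {}"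
    and "Max {dist x y | x y. x \<in> P \<and> y \<in> P} \<le> MD"
    and "MD \<le> 2 * Max {dist x y | x y. x \<in> P \<and> y \<in> P}"
    and "p1 \<in> P" and "p2 \<in> P" and "p3 \<in> P"
    and "s1 \<in> {0..MD}" and "s2 \<in> {0..MD}" and "s3 \<in> {0..MD}"
    and "M > 0" and "c > 1"
  shows "(\<forall>x\<in>P. spmf (next_added P MD ((p1, s1), (p2, s2), (p3, s3)) M c {} Q) x
                  = 1 / real (card P))
       \<and> ((S \<subseteq> P \<and> S \<noteq> {} \<and> S \<noteq> P \<and> lsh_successful P S c Q) \<longrightarrow>
           (\<forall>x\<in>P. spmf (next_added P MD ((p1, s1), (p2, s2), (p3, s3)) M c S Q) x
                  = (dist x (Q x))\<^sup>2 / (\<Sum>y\<in>P. (dist y (Q y))\<^sup>2)))"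
proof -
  note fin = assms(1) and Pne = assms(2) and Mpos = assms(11) and cgt = assms(12)
  define T where "T = ((p1, s1), (p2, s2), (p3, s3))"
  have acc01: "0 \<le> accept_prob P MD T c S' Q z \<and> accept_prob P MD T c S' Q z \<le> 1" for S' z
    by (auto simp: accept_prob_def)
  have distfin: "finite {dist x y | x y. x \<in> P \<and> y \<in> P}"
  proof -
    have "{dist x y | x y. x \<in> P \<and> y \<in> P} = (\<lambda>(x, y). dist x y) ` (P \<times> P)" by auto
    then show ?thesis using fin by simp
  qed
  have hP: "dist z p \<le> MD" if "z \<in> P" "p \<in> P" for z p
  proof -
    have "dist z p \<le> Max {dist x y | x y. x \<in> P \<and> y \<in> P}"
      using that distfin by (intro Max_ge) auto
    then show ?thesis using assms(3) by linarith
  qed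
  have part1: "\<forall>x\<in>P. spmf (next_added P MD T M c {} Q) x = 1 / real (card P)"
  proof
    fix x assume x: "x \<in> P"
    define f where "f = (\<lambda>z. if z \<in> P then 1 / real (card P) else 0)"
    have cP: "card P > 0" using fin Pne by (simp add: card_gt_0_iff)
    have sf: "(\<Sum>y\<in>P. mt_weight P MD T M {} y) = real (card P) * M"
      by (simp add: mt_weight_def)
    have samp: "multi_tree_sample P MD T M {} = embed_pmf f"
      unfolding multi_tree_sample_def sf f_def using Mpos
      by (intro arg_cong[where f=embed_pmf]) (auto simp: mt_weight_def fun_eq_iff)
    have pw: "pmf (multi_tree_sample P MD T M {}) z = f z" for z
      unfolding samp by (rule pmf_embed_fin[OF fin]) (use cP in \<open>auto simp: f_def\<close>)
    have sup: "set_pmf (multi_tree_sample P MD T M {}) \<subseteq> P"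
      by (rule set_pmf_embed_sub[where g = "\<lambda>_. 1 / real (card P)"]) (simp add: pw f_def)
    have a1: "accept_prob P MD T c {} Q z = 1" for z by (simp add: accept_prob_def)
    have sw: "(\<Sum>z\<in>P. pmf (multi_tree_sample P MD T M {}) z * accept_prob P MD T c {} Q z) = 1"
      using cP by (simp add: a1 pw f_def)
    show "spmf (next_added P MD T M c {} Q) x = 1 / real (card P)"
      using fix_val[OF fin sup acc01] sw pw[of x] x by (simp add: a1 f_def)
  qed
  have part2: "\<forall>x\<in>P. spmf (next_added P MD T M c S Q) x
                  = (dist x (Q x))\<^sup>2 / (\<Sum>y\<in>P. (dist y (Q y))\<^sup>2)"
    if S: "S \<subseteq> P" "S \<noteq> {}" "S \<noteq> P" and lsh: "lsh_successful P S c Q"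
  proof
    fix x assume x: "x \<in> P"
    have finS: "finite S" using S fin finite_subset by blast
    obtain y0 where y0: "y0 \<in> P" "y0 \<notin> S" using S by blast
    obtain q0 where q0: "q0 \<in> S" using S by blast
    have "0 < dist y0 q0" using y0 q0 by auto
    also have "\<dots> \<le> MD" using hP y0 q0 S by blast
    finally have md: "MD > 0" .
    define m where "m = (\<lambda>z. multi_tree_dist_set P MD T z S)"
    define d where "d = (\<lambda>z. dist z (Q z))"
    have mge: "Min ((\<lambda>q. dist z q) ` S) \<le> m z" if "z \<in> P" for z
      unfolding m_def multi_tree_dist_set_def T_def
    proof (subst Min_ge_iff)
      show "\<forall>a\<in>(\<lambda>q. multi_tree_dist P MD ((p1, s1), (p2, s2), (p3, s3)) z q) ` S.
              Min ((\<lambda>q. dist z q) ` S) \<le> a"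
      proof
        fix a assume "a \<in> (\<lambda>q. multi_tree_dist P MD ((p1, s1), (p2, s2), (p3, s3)) z q) ` S"
        then obtain q where q: "q \<in> S" "a = multi_tree_dist P MD ((p1, s1), (p2, s2), (p3, s3)) z q" by blast
        have "Min ((\<lambda>q. dist z q) ` S) \<le> dist z q" using finS q by (intro Min_le) auto
        also have "\<dots> \<le> a" unfolding q(2)
          by (rule mtd_ge[OF fin md hP assms(5-7) that]) (use q S in auto)
        finally show "Min ((\<lambda>q. dist z q) ` S) \<le> a" .
      qed
    qed (use finS S in auto)
    have Minnn: "0 \<le> Min ((\<lambda>q. dist z q) ` S)" for z using finS S by (subst Min_ge_iff) auto
    have mnn: "0 \<le> m z" if "z \<in> P" for z using mge[OF that] Minnn[of z] by linarith
    have dle: "d z \<le> c * m z" if "z \<in> P" for z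
    proof -
      have "d z \<le> c * Min ((\<lambda>q. dist z q) ` S)" using lsh that unfolding lsh_successful_def d_def by blast
      also have "\<dots> \<le> c * m z" using mge[OF that] cgt by simp
      finally show ?thesis .
    qed
    have my0: "0 < m y0"
    proof -
      have "Min ((\<lambda>q. dist y0 q) ` S) \<in> (\<lambda>q. dist y0 q) ` S" using finS S by (intro Min_in) auto
      then have "0 < Min ((\<lambda>q. dist y0 q) ` S)" using y0 by auto
      then show ?thesis using mge[OF y0(1)] by linarith
    qed
    define Z where "Z = (\<Sum>y\<in>P. (m y)\<^sup>2)"
    have "(m y0)\<^sup>2 \<le> Z" unfolding Z_def using fin y0 by (intro member_le_sum) auto
    then have Zpos: "Z > 0" using my0 by (smt (verit) zero_less_power)
    define D where "D = (\<Sum>y\<in>P. (d y)\<^sup>2)"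
    have dy0: "d y0 > 0" using lsh y0 unfolding lsh_successful_def d_def by auto
    have "(d y0)\<^sup>2 \<le> D" unfolding D_def using fin y0 by (intro member_le_sum) auto
    then have Dpos: "D > 0" using dy0 by (smt (verit) zero_less_power)
    define f where "f = (\<lambda>z. if z \<in> P then (m z)\<^sup>2 / Z else 0)"
    have samp: "multi_tree_sample P MD T M S = embed_pmf f"
      unfolding multi_tree_sample_def f_def m_def Z_def using S
      by (intro arg_cong[where f=embed_pmf]) (auto simp: mt_weight_def fun_eq_iff)
    have pw: "pmf (multi_tree_sample P MD T M S) z = f z" for z
      unfolding samp by (rule pmf_embed_fin[OF fin]) (use Zpos in \<open>auto simp: f_def Z_def sum_divide_distrib[symmetric]\<close>)
    have sup: "set_pmf (multi_tree_sample P MD T M S) \<subseteq> P"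
      by (rule set_pmf_embed_sub[where g = "\<lambda>z. (m z)\<^sup>2 / Z"]) (simp add: pw f_def)
    have key: "pmf (multi_tree_sample P MD T M S) z * accept_prob P MD T c S Q z = (d z)\<^sup>2 / (c\<^sup>2 * Z)"
      if z: "z \<in> P" for z
    proof (cases "m z = 0")
      case True
      then have "d z = 0" using dle[OF z] by (simp add: d_def)
      then show ?thesis using True z by (simp add: pw f_def)
    next
      case False
      then have mp: "m z > 0" using mnn[OF z] by simp
      have "0 \<le> d z" by (simp add: d_def)
      then have "(d z)\<^sup>2 \<le> (c * m z)\<^sup>2" using dle[OF z] by (intro power_mono) auto
      then have "(d z)\<^sup>2 / (c\<^sup>2 * (m z)\<^sup>2) \<le> 1" using mp cgt by (simp add: power_mult_distrib)
      then have "accept_prob P MD T c S Q z = (d z)\<^sup>2 / (c\<^sup>2 * (m z)\<^sup>2)"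
        using S by (simp add: accept_prob_def d_def m_def)
      then show ?thesis using z mp by (simp add: pw f_def)
    qed
    have sw: "(\<Sum>z\<in>P. pmf (multi_tree_sample P MD T M S) z * accept_prob P MD T c S Q z) = D / (c\<^sup>2 * Z)"
      using key by (simp add: D_def sum_divide_distrib)
    have "spmf (next_added P MD T M c S Q) x = ((d x)\<^sup>2 / (c\<^sup>2 * Z)) / (D / (c\<^sup>2 * Z))"
      using fix_val[OF fin sup acc01] Dpos Zpos cgt sw key[OF x] by (simp add: sw)
    also have "\<dots> = (d x)\<^sup>2 / D" using Zpos cgt by (simp add: field_simps)
    finally show "spmf (next_added P MD T M c S Q) x = (dist x (Q x))\<^sup>2 / (\<Sum>y\<in>P. (dist y (Q y))\<^sup>2)"
      by (simp add: d_def D_def)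
  qed
  show ?thesis using part1 part2 unfolding T_def by blast
qed

end
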